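(* Let $\{c_n\}_{n\in\mathbb Z}$ be complex numbers such that $c_n+c_{-n}\in M(\theta_0)$ for all $n\ge1$ for some $\theta_0\in[0,\pi/2)$, and such that $\{c_n\}_{n\ge0}\in NBVS$. For $n\ge0$ put $S_n(x)=\sum_{k=-n}^{n}c_ke^{ikx}$. Then the following are equivalent: (i) $S_n(x)$ converges for every $x\in\mathbb R$ to a function $f$ which is continuous and $2\pi$-periodic, and $\lim_{n\to\infty}\|f-S_n\|=0$, where $\|g\|=\max_{x\in\mathbb R}|g(x)|$; (ii) $\lim_{n\to\infty}nc_n=0$ and $\sum_{n=1}^\infty|c_n+c_{-n}|<\infty$.
   Context: For $\theta_0\in[0,\pi/2)$ let $M(\theta_0)=\{z\in\mathbb C: |\arg z|\le\theta_0\}$ (with $0\in M(\theta_0)$). Write $\Delta c_n=c_n-c_{n+1}$. A complex sequence $\mathbf C=\{c_n\}$ belongs to $NBVS$ if there is $\theta_0\in[0,\pi/2)$ with $c_n\in M(\theta_0)$ for all $n\ge1$ and a constant $K(\mathbf C)>0$ (depending only on $\mathbf C$) such that $\sum_{n=m}^{2m}|\Delta c_n|\le K(\mathbf C)\big(|c_m|+|c_{2m}|\big)$ for all $m=1,2,\dots$. *)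

theory Defs
  imports "HOL-Analysis.Analysis"
begin

definition sectorM :: "real \<Rightarrow> complex set" where
  "sectorM \<theta>0 = {z. z = 0 \<or> \<bar>Arg z\<bar> \<le> \<theta>0}"

definition NBVS :: "(nat \<Rightarrow> complex) \<Rightarrow> bool" where
  "NBVS c \<longleftrightarrow>
     (\<exists>\<theta>0. 0 \<le> \<theta>0 \<and> \<theta>0 < pi/2 \<and> (\<forall>n\<ge>1. c n \<in> sectorM \<theta>0)) \<and>
     (\<exists>K>0. \<forall>m\<ge>1. (\<Sum>n=m..2*m. cmod (c n - c (Suc n))) \<le> K * (cmod (c m) + cmod (c (2*m))))"

definition partial_sum :: "(int \<Rightarrow> complex) \<Rightarrow> nat \<Rightarrow> real \<Rightarrow> complex" where
  "partial_sum c n x = (\<Sum>k\<in>{-int n..int n}. c k * exp (\<i> * of_int k * of_real x))"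

end

theory Submission
  imports Defs
begin


lemma pow_sub1_bound:
  fixes z :: complex assumes "cmod z = 1"
  shows "cmod (z ^ k - 1) \<le> real k * cmod (z - 1)"
proof (induction k)
  case 0 then show ?case by simp
next
  case (Suc k)
  have "z ^ Suc k - 1 = z * (z ^ k - 1) + (z - 1)" by (simp add: algebra_simps)
  then have "cmod (z ^ Suc k - 1) \<le> cmod (z * (z ^ k - 1)) + cmod (z - 1)"
    by (metis norm_triangle_ineq)
  also have "cmod (z * (z ^ k - 1)) = cmod (z ^ k - 1)" by (simp add: norm_mult assms)
  finally show ?case using Suc by (simp add: algebra_simps)
qed

lemma geo_bound:
  fixes z :: complex assumes "cmod z = 1" "z \<noteq> 1"
  shows "cmod (\<Sum>j=p..q. z ^ j) \<le> 2 / cmod (1 - z)"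
proof (cases "q < p")
  case True then show ?thesis by simp
next
  case False
  have d: "cmod (1 - z) > 0" using assms by simp
  have "(\<Sum>j=p..q. z ^ j) = (z ^ p - z ^ Suc q) / (1 - z)"
    using False assms by (simp add: sum_gp)
  also have "cmod \<dots> = cmod (z ^ p - z ^ Suc q) / cmod (1 - z)" by (simp add: norm_divide)
  also have "\<dots> \<le> 2 / cmod (1 - z)"
  proof (rule divide_right_mono)
    have "cmod (z ^ p - z ^ Suc q) \<le> cmod (z ^ p) + cmod (z ^ Suc q)" by (rule norm_triangle_ineq4)
    also have "\<dots> = 2" using assms by (simp add: norm_power norm_mult)
    finally show "cmod (z ^ p - z ^ Suc q) \<le> 2" .
  qed simp
  finally show ?thesis .
qed

lemma abel_sum:
  fixes b g :: "nat \<Rightarrow> complex"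
  shows "(\<Sum>k=p..p+d. b k * g k) = b (p+d) * (\<Sum>j=p..p+d. g j)
          + (\<Sum>k=p..<p+d. (b k - b (Suc k)) * (\<Sum>j=p..k. g j))"
proof (induction d)
  case 0 then show ?case by simp
next
  case (Suc d)
  have "(\<Sum>k=p..p+Suc d. b k * g k) = (\<Sum>k=p..p+d. b k * g k) + b (Suc (p+d)) * g (Suc (p+d))"
    by simp
  also have "\<dots> = b (p+d) * (\<Sum>j=p..p+d. g j)
          + (\<Sum>k=p..<p+d. (b k - b (Suc k)) * (\<Sum>j=p..k. g j)) + b (Suc (p+d)) * g (Suc (p+d))"
    using Suc by simp
  also have "\<dots> = b (Suc (p+d)) * (\<Sum>j=p..Suc (p+d). g j)
          + (\<Sum>k=p..<Suc (p+d). (b k - b (Suc k)) * (\<Sum>j=p..k. g j))"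
    by (simp add: algebra_simps)
  finally show ?case by simp
qed

lemma abel_bound:
  fixes b g :: "nat \<Rightarrow> complex"
  assumes "p \<le> n" and G: "\<And>k. cmod (\<Sum>j=p..k. g j) \<le> B"
  shows "cmod (\<Sum>k=p..n. b k * g k) \<le> B * (cmod (b n) + (\<Sum>k=p..<n. cmod (b k - b (Suc k))))"
proof -
  obtain d where n: "n = p + d" using assms(1) le_Suc_ex by blast
  have B0: "0 \<le> B" using G[of p] by (meson norm_ge_zero order_trans)
  have "cmod (\<Sum>k=p..n. b k * g k) \<le> cmod (b n * (\<Sum>j=p..n. g j))
          + cmod (\<Sum>k=p..<n. (b k - b (Suc k)) * (\<Sum>j=p..k. g j))"
    unfolding n abel_sum by (rule norm_triangle_ineq)
  also have "cmod (b n * (\<Sum>j=p..n. g j)) \<le> cmod (b n) * B"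
    by (simp add: norm_mult G mult_left_mono)
  also have "cmod (\<Sum>k=p..<n. (b k - b (Suc k)) * (\<Sum>j=p..k. g j))
       \<le> (\<Sum>k=p..<n. cmod (b k - b (Suc k)) * B)"
    by (rule order_trans[OF norm_sum sum_mono]) (simp add: norm_mult G mult_left_mono)
  finally show ?thesis by (simp add: algebra_simps sum_distrib_left)
qed

lemma telescope_bound:
  fixes b :: "nat \<Rightarrow> complex"
  assumes "m \<le> n"
  shows "cmod (b m - b n) \<le> (\<Sum>k=m..<n. cmod (b k - b (Suc k)))"
  using assms
proof (induction n)
  case 0 then show ?case by simp
next
  case (Suc n)
  show ?case
  proof (cases "m = Suc n")
    case True then show ?thesis by simp
  next
    case False
    then have "m \<le> n" using Suc by simp
    have "cmod (b m - b (Suc n)) \<le> cmod (b m - b n) + cmod (b n - b (Suc n))"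
      by (metis norm_triangle_ineq diff_add_cancel add_diff_eq)
    then show ?thesis using Suc.IH[OF \<open>m \<le> n\<close>] \<open>m \<le> n\<close> by simp
  qed
qed

lemma sector_re:
  assumes "0 \<le> \<theta>" "\<theta> < pi/2" "z \<in> sectorM \<theta>"
  shows "cos \<theta> * cmod z \<le> Re z"
proof (cases "z = 0")
  case True then show ?thesis by simp
next
  case False
  then have a: "\<bar>Arg z\<bar> \<le> \<theta>" using assms by (simp add: sectorM_def)
  have "cos \<theta> \<le> cos \<bar>Arg z\<bar>"
    using a assms by (intro cos_monotone_0_pi_le) auto
  also have "\<dots> = Re z / cmod z" using False by (simp add: cos_Arg)
  finally show ?thesis using False by (simp add: field_simps)
qed


lemma nbvs_tail:
  fixes b :: "nat \<Rightarrow> complex"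
  assumes K: "\<forall>m\<ge>1. (\<Sum>n=m..2*m. cmod (b n - b (Suc n))) \<le> K * (cmod (b m) + cmod (b (2*m)))"
    and Kpos: "K > 0"
    and eps: "\<forall>k\<ge>N. real k * cmod (b k) \<le> e" and N1: "N \<ge> 1"
    and pN: "p \<ge> N"
  shows "(\<Sum>k=p..<q. cmod (b k - b (Suc k))) \<le> 4*K*e/p"
  using pN
proof (induction "q - p" arbitrary: p rule: less_induct)
  case less
  have p1: "p \<ge> 1" using less.prems N1 by simp
  have bp: "cmod (b p) \<le> e / p" using eps less.prems p1 by (simp add: field_simps mult.commute)
  have b2p: "cmod (b (2*p)) \<le> e / (2*p)" using eps less.prems p1 spec[OF eps, of "2*p"]
    by (simp add: field_simps mult.commute)
  have e0: "0 \<le> e" using eps N1 by (meson norm_ge_zero order_trans mult_nonneg_nonneg of_nat_0_le_iff order_refl)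
  have V: "(\<Sum>n=p..2*p. cmod (b n - b (Suc n))) \<le> 2*K*e/p"
  proof -
    have "(\<Sum>n=p..2*p. cmod (b n - b (Suc n))) \<le> K * (cmod (b p) + cmod (b (2*p)))" using K p1 by simp
    also have "\<dots> \<le> K * (e/p + e/(2*p))" using bp b2p Kpos by (intro mult_left_mono) auto
    also have "\<dots> \<le> 2*K*e/p" using Kpos e0 p1 by (simp add: field_simps)
    finally show ?thesis .
  qed
  show ?case
  proof (cases "q \<le> 2*p+1")
    case True
    have "(\<Sum>k=p..<q. cmod (b k - b (Suc k))) \<le> (\<Sum>n=p..2*p. cmod (b n - b (Suc n)))"
      using True by (intro sum_mono2) auto
    also have "\<dots> \<le> 2*K*e/p" by (rule V)
    also have "\<dots> \<le> 4*K*e/p" using Kpos e0 p1 by (simp add: field_simps)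
    finally show ?thesis .
  next
    case False
    have split: "(\<Sum>k=p..<q. cmod (b k - b (Suc k))) = (\<Sum>k=p..<2*p. cmod (b k - b (Suc k))) + (\<Sum>k=2*p..<q. cmod (b k - b (Suc k)))"
      using False by (intro sum.atLeastLessThan_concat[symmetric]) auto
    have "(\<Sum>k=p..<2*p. cmod (b k - b (Suc k))) \<le> (\<Sum>n=p..2*p. cmod (b n - b (Suc n)))"
      by (intro sum_mono2) auto
    also have "\<dots> \<le> 2*K*e/p" by (rule V)
    finally have s1: "(\<Sum>k=p..<2*p. cmod (b k - b (Suc k))) \<le> 2*K*e/p" .
    have s2: "(\<Sum>k=2*p..<q. cmod (b k - b (Suc k))) \<le> 4*K*e/(2*p)"
      using less.hyps[of "2*p"] False p1 less.prems by (simp add: of_nat_mult)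
    have "4*K*e/(2*p) = 2*K*e/p" using p1 by (simp add: field_simps)
    then show ?thesis using split s1 s2 by linarith
  qed
qed

lemma sine_suff:
  fixes b :: "nat \<Rightarrow> complex"
  assumes K: "\<forall>m\<ge>1. (\<Sum>n=m..2*m. cmod (b n - b (Suc n))) \<le> K * (cmod (b m) + cmod (b (2*m)))"
    and Kpos: "K > 0"
    and lim: "(\<lambda>n. of_nat n * b n) \<longlonglongrightarrow> 0"
    and epos: "\<epsilon> > 0"
  shows "\<exists>N. \<forall>m\<ge>N. \<forall>n z. cmod z = 1 \<longrightarrow> cmod (\<Sum>k=Suc m..n. b k * (z^k - cnj z^k)) \<le> \<epsilon>"
proof -
  define \<delta> where "\<delta> = \<epsilon> / (6 + 16*K)"
  have dpos: "\<delta> > 0" using epos Kpos by (simp add: \<delta>_def)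
  obtain N0 where N0: "\<And>k. k \<ge> N0 \<Longrightarrow> cmod (of_nat k * b k - 0) < \<delta>"
    using LIMSEQ_D[OF lim dpos] by blast
  define N where "N = max N0 1"
  have N1: "N \<ge> 1" by (simp add: N_def)
  have bnd: "\<forall>k\<ge>N. real k * cmod (b k) \<le> \<delta>"
  proof (intro allI impI)
    fix k assume "k \<ge> N"
    then have "cmod (of_nat k * b k - 0) < \<delta>" using N0 N_def by simp
    then show "real k * cmod (b k) \<le> \<delta>" by (simp add: norm_mult)
  qed
  have main: "cmod (\<Sum>k=Suc m..n. b k * (z^k - cnj z^k)) \<le> \<epsilon>"
    if mN: "m \<ge> N" and z1: "cmod z = 1" for m n z
  proof (cases "z = 1")
    case True then show ?thesis using epos by simp
  next
    case False
    define w where "w = cnj z"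
    define d where "d = cmod (1 - z)"
    have dpos': "d > 0" using False by (simp add: d_def)
    have w1: "cmod w = 1" using z1 by (simp add: w_def)
    have wn1: "w \<noteq> 1" using False by (auto simp: w_def)
    have dw: "cmod (1 - w) = d"
    proof -
      have "1 - w = cnj (1 - z)" by (simp add: w_def)
      then show ?thesis unfolding d_def by (metis complex_mod_cnj)
    qed
    define M where "M = nat \<lfloor>1/d\<rfloor>"
    have M1: "real M \<le> 1/d" using dpos' by (simp add: M_def)
    have f0: "0 \<le> \<lfloor>1/d\<rfloor>" using dpos' by simp
    have M2: "1/d < real M + 1"
    proof -
      have "1/d < of_int \<lfloor>1/d\<rfloor> + 1" by linarith
      moreover have "real M = of_int \<lfloor>1/d\<rfloor>" using f0 by (simp add: M_def)
      ultimately show ?thesis by simp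
    qed
    define A1 where "A1 = {k\<in>{Suc m..n}. k \<le> M}"
    define A2 where "A2 = {Suc (max m M)..n}"
    have Aeq: "{Suc m..n} = A1 \<union> A2" "A1 \<inter> A2 = {}" by (auto simp: A1_def A2_def)
    define F where "F = (\<lambda>k. b k * (z^k - w^k))"
    have sumsplit: "(\<Sum>k=Suc m..n. F k) = (\<Sum>k\<in>A1. F k) + (\<Sum>k\<in>A2. F k)"
      unfolding Aeq(1) by (rule sum.union_disjoint) (auto simp: A1_def A2_def Aeq(2))
    have P1: "cmod (\<Sum>k\<in>A1. F k) \<le> 2 * \<delta>"
    proof -
      have each: "cmod (F k) \<le> 2 * d * \<delta>" if k: "k \<in> A1" for k
      proof -
        have kN: "k \<ge> N" using k mN by (auto simp: A1_def)
        have "cmod (z^k - w^k) \<le> cmod (z^k - 1) + cmod (w^k - 1)"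
          by (metis norm_triangle_ineq4 diff_diff_eq2 diff_add_cancel add_diff_cancel_left' norm_minus_commute
              norm_triangle_sub)
        also have "\<dots> \<le> real k * cmod (z - 1) + real k * cmod (w - 1)"
          using pow_sub1_bound[OF z1, of k] pow_sub1_bound[OF w1, of k] by simp
        also have "\<dots> = 2 * real k * d"
          using dw by (simp add: d_def norm_minus_commute)
        finally have "cmod (z^k - w^k) \<le> 2 * real k * d" .
        then have "cmod (F k) \<le> cmod (b k) * (2 * real k * d)"
          by (simp add: F_def norm_mult mult_left_mono)
        also have "\<dots> = 2 * d * (real k * cmod (b k))" by simp
        also have "\<dots> \<le> 2 * d * \<delta>" using bnd kN dpos' by (intro mult_left_mono) auto
        finally show ?thesis .
      qed
      have "cmod (\<Sum>k\<in>A1. F k) \<le> (\<Sum>k\<in>A1. cmod (F k))" by (rule norm_sum)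
      also have "\<dots> \<le> real (card A1) * (2 * d * \<delta>)" by (rule sum_bounded_above) (use each in auto)
      also have "\<dots> \<le> real M * (2 * d * \<delta>)"
      proof -
        have "A1 \<subseteq> {1..M}" by (auto simp: A1_def)
        then have "card A1 \<le> M" using card_mono[of "{1..M}" A1] by simp
        then show ?thesis using dpos' dpos by (intro mult_right_mono) auto
      qed
      also have "\<dots> \<le> (1/d) * (2 * d * \<delta>)" using M1 dpos' dpos by (intro mult_right_mono) auto
      also have "\<dots> = 2 * \<delta>" using dpos' by simp
      finally show ?thesis .
    qed
    have P2: "cmod (\<Sum>k\<in>A2. F k) \<le> 4 * (1 + 4*K) * \<delta>"
    proof (cases "n < Suc (max m M)")
      case True
      then have "A2 = {}" by (auto simp: A2_def)
      then show ?thesis using dpos Kpos by simp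
    next
      case False
      define p where "p = Suc (max m M)"
      have pn: "p \<le> n" using False by (simp add: p_def)
      have pN: "p \<ge> N" using mN by (simp add: p_def)
      have p1: "p \<ge> 1" by (simp add: p_def)
      have pd: "1 / real p \<le> d"
      proof -
        have "1/d < real p" using M2 by (simp add: p_def)
        then show ?thesis using dpos' p1 by (simp add: field_simps)
      qed
      have tail: "(\<Sum>k=p..<n. cmod (b k - b (Suc k))) \<le> 4*K*\<delta>/p"
        by (rule nbvs_tail[OF K Kpos bnd N1 pN])
      have bn: "cmod (b n) \<le> \<delta> / p"
      proof -
        have "real n * cmod (b n) \<le> \<delta>" using bnd pN pn by simp
        then have "cmod (b n) \<le> \<delta> / n" using pn p1 by (simp add: field_simps mult.commute)
        also have "\<dots> \<le> \<delta> / p" using pn p1 dpos by (intro divide_left_mono) auto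
        finally show ?thesis .
      qed
      have one: "cmod (\<Sum>k=p..n. b k * u^k) \<le> 2 * (1 + 4*K) * \<delta>"
        if u1: "cmod u = 1" "u \<noteq> 1" "cmod (1 - u) = d" for u
      proof -
        have "cmod (\<Sum>k=p..n. b k * u^k) \<le> (2/d) * (cmod (b n) + (\<Sum>k=p..<n. cmod (b k - b (Suc k))))"
          by (rule abel_bound[OF pn]) (use geo_bound[OF u1(1,2)] u1(3) in auto)
        also have "\<dots> \<le> (2/d) * (\<delta>/p + 4*K*\<delta>/p)"
          using bn tail dpos' by (intro mult_left_mono) auto
        also have "\<dots> = 2 * (1 + 4*K) * \<delta> * ((1/d) * (1/p))" using dpos' p1 by (simp add: field_simps)
        also have "\<dots> \<le> 2 * (1 + 4*K) * \<delta> * 1"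
        proof (intro mult_left_mono)
          have "(1/d) * (1/p) \<le> (1/d) * d" using pd dpos' by (intro mult_left_mono) auto
          then show "(1/d) * (1/real p) \<le> 1" using dpos' by simp
        qed (use Kpos dpos in auto)
        finally show ?thesis by simp
      qed
      have "(\<Sum>k\<in>A2. F k) = (\<Sum>k=p..n. b k * z^k) - (\<Sum>k=p..n. b k * w^k)"
        by (simp add: A2_def p_def F_def right_diff_distrib sum_subtractf)
      then have "cmod (\<Sum>k\<in>A2. F k) \<le> cmod (\<Sum>k=p..n. b k * z^k) + cmod (\<Sum>k=p..n. b k * w^k)"
        by (simp add: norm_triangle_ineq4)
      also have "\<dots> \<le> 2 * (1 + 4*K) * \<delta> + 2 * (1 + 4*K) * \<delta>"
        using one[OF z1 \<open>z \<noteq> 1\<close> d_def[symmetric]] one[OF w1 wn1 dw] by (intro add_mono) (auto simp: d_def)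
      finally show ?thesis by (simp add: algebra_simps)
    qed
    have "cmod (\<Sum>k=Suc m..n. F k) \<le> 2 * \<delta> + 4 * (1 + 4*K) * \<delta>"
      unfolding sumsplit by (rule order_trans[OF norm_triangle_ineq add_mono[OF P1 P2]])
    also have "\<dots> = (6 + 16*K) * \<delta>" by (simp add: algebra_simps)
    also have "\<dots> = \<epsilon>" using Kpos by (simp add: \<delta>_def)
    finally show ?thesis by (simp add: F_def w_def)
  qed
  then show ?thesis by blast
qed



lemma nbvs_point:
  fixes b :: "nat \<Rightarrow> complex"
  assumes K: "\<forall>m\<ge>1. (\<Sum>n=m..2*m. cmod (b n - b (Suc n))) \<le> K * (cmod (b m) + cmod (b (2*m)))"
    and Kpos: "K > 0" and n1: "n \<ge> 1"
  shows "real n * cmod (b n) \<le> 2*(K+1)*((\<Sum>k=(n+1) div 2..2*((n+1) div 2). cmod (b k)) + (\<Sum>k=n..2*n. cmod (b k)))"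
proof -
  define h where "h = (n+1) div 2"
  have h1: "h \<ge> 1" using n1 by (simp add: h_def)
  have hn: "h \<le> n" "n \<le> 2*h" "2*h \<le> n+1" unfolding h_def using n1 by presburger+
  have each: "cmod (b n) \<le> (K+1) * (cmod (b m) + cmod (b (2*m)))" if m: "m \<in> {h..n}" for m
  proof -
    have m1: "m \<ge> 1" "m \<le> n" "n \<le> 2*m" using m h1 hn by auto
    have "cmod (b m - b n) \<le> (\<Sum>k=m..<n. cmod (b k - b (Suc k)))" by (rule telescope_bound) (use m1 in simp)
    also have "\<dots> \<le> (\<Sum>k=m..2*m. cmod (b k - b (Suc k)))" using m1 by (intro sum_mono2) auto
    also have "\<dots> \<le> K * (cmod (b m) + cmod (b (2*m)))" using K m1 by simp
    finally have d: "cmod (b m - b n) \<le> K * (cmod (b m) + cmod (b (2*m)))" .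
    have "cmod (b n) \<le> cmod (b m) + cmod (b m - b n)"
      using norm_triangle_ineq4[of "b m" "b m - b n"] by simp
    also have "\<dots> \<le> cmod (b m) + K * (cmod (b m) + cmod (b (2*m)))" using d by simp
    also have "\<dots> \<le> (K+1) * (cmod (b m) + cmod (b (2*m)))" by (simp add: algebra_simps)
    finally show ?thesis .
  qed
  have "real (card {h..n}) * cmod (b n) = (\<Sum>m=h..n. cmod (b n))" by simp
  also have "\<dots> \<le> (\<Sum>m=h..n. (K+1) * (cmod (b m) + cmod (b (2*m))))" by (rule sum_mono) (rule each)
  also have "\<dots> = (K+1) * ((\<Sum>m=h..n. cmod (b m)) + (\<Sum>m=h..n. cmod (b (2*m))))"
    by (simp only: sum.distrib[symmetric] sum_distrib_left)
  also have "\<dots> \<le> (K+1) * ((\<Sum>k=h..2*h. cmod (b k)) + (\<Sum>k=n..2*n. cmod (b k)))"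
  proof (intro mult_left_mono add_mono)
    show "(\<Sum>m=h..n. cmod (b m)) \<le> (\<Sum>k=h..2*h. cmod (b k))" using hn by (intro sum_mono2) auto
    have "(\<Sum>m=h..n. cmod (b (2*m))) = (\<Sum>k\<in>(\<lambda>m. 2*m) ` {h..n}. cmod (b k))"
      by (subst sum.reindex) (auto simp: inj_on_def)
    also have "\<dots> \<le> (\<Sum>k=n..2*n. cmod (b k))" using hn by (intro sum_mono2) auto
    finally show "(\<Sum>m=h..n. cmod (b (2*m))) \<le> (\<Sum>k=n..2*n. cmod (b k))" .
  qed (use Kpos in auto)
  finally have *: "real (card {h..n}) * cmod (b n) \<le> (K+1) * ((\<Sum>k=h..2*h. cmod (b k)) + (\<Sum>k=n..2*n. cmod (b k)))" .
  have "n \<le> 2 * card {h..n}" using hn by simp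
  then have "real n \<le> 2 * real (card {h..n})" by linarith
  then have "real n * cmod (b n) \<le> 2 * (real (card {h..n}) * cmod (b n))"
    using mult_right_mono[OF _ norm_ge_zero, of "real n" "2 * real (card {h..n})" "b n"] by (simp only: mult.assoc)
  also have "\<dots> \<le> 2 * ((K+1) * ((\<Sum>k=h..2*h. cmod (b k)) + (\<Sum>k=n..2*n. cmod (b k))))"
    using * by simp
  finally show ?thesis by (simp only: h_def mult.assoc)
qed


lemma diff_cnj: "z - cnj z = 2 * \<i> * complex_of_real (Im z)"
  by (simp add: complex_eq_iff)

lemma exp_pow_diff:
  fixes x :: real
  shows "exp (\<i> * of_real x) ^ k - cnj (exp (\<i> * of_real x)) ^ k = 2 * \<i> * of_real (sin (real k * x))"
proof -
  have e: "exp (\<i> * of_real x) ^ k = exp (\<i> * of_real (real k * x))"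
    by (simp add: exp_of_nat_mult[symmetric] algebra_simps)
  have "cnj (exp (\<i> * of_real x)) ^ k = cnj (exp (\<i> * of_real x) ^ k)" by simp
  then show ?thesis unfolding e by (simp add: diff_cnj Im_exp)
qed

lemma block_bound:
  fixes b :: "nat \<Rightarrow> complex"
  assumes c0: "c0 > 0" and sec: "\<forall>k\<ge>1. c0 * cmod (b k) \<le> Re (b k)" and p1: "p \<ge> 1"
  shows "c0 * (\<Sum>k=p..2*p. cmod (b k)) \<le>
     cmod (\<Sum>k=p..2*p. b k * (exp (\<i> * of_real (pi/(4*p))) ^ k - cnj (exp (\<i> * of_real (pi/(4*p)))) ^ k))"
proof -
  define x where "x = pi/(4*p)"
  have sn: "1/2 \<le> sin (real k * x)" if k: "k \<in> {p..2*p}" for k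
  proof -
    have "pi/6 \<le> real k * x"
    proof -
      have "pi/6 \<le> pi/4" by simp
      also have "pi/4 = real p * x" using p1 by (simp add: x_def)
      also have "\<dots> \<le> real k * x" using k by (intro mult_right_mono) (auto simp: x_def)
      finally show ?thesis .
    qed
    moreover have "real k * x \<le> pi/2"
    proof -
      have "real k * x \<le> real (2*p) * x" using k by (intro mult_right_mono) (auto simp: x_def)
      also have "\<dots> = pi/2" using p1 by (simp add: x_def)
      finally show ?thesis .
    qed
    ultimately have "sin (pi/6) \<le> sin (real k * x)" by (intro sin_monotone_2pi_le) auto
    then show ?thesis by (simp add: sin_30)
  qed
  define T where "T = (\<Sum>k=p..2*p. b k * of_real (sin (real k * x)))"
  have sig: "(\<Sum>k=p..2*p. b k * (exp (\<i> * of_real x) ^ k - cnj (exp (\<i> * of_real x)) ^ k)) = 2 * \<i> * T"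
    by (simp add: exp_pow_diff T_def sum_distrib_left algebra_simps)
  have "c0 * (\<Sum>k=p..2*p. cmod (b k)) = 2 * (\<Sum>k=p..2*p. (c0 * cmod (b k)) * (1/2))"
    by (simp add: sum_distrib_left)
  also have "\<dots> \<le> 2 * (\<Sum>k=p..2*p. Re (b k) * sin (real k * x))"
  proof -
    have "(\<Sum>k=p..2*p. (c0 * cmod (b k)) * (1/2)) \<le> (\<Sum>k=p..2*p. Re (b k) * sin (real k * x))"
    proof (rule sum_mono)
      fix k assume k: "k \<in> {p..2*p}"
      have h1: "c0 * cmod (b k) \<le> Re (b k)" using sec k p1 by auto
      have h2: "0 \<le> c0 * cmod (b k)" using c0 by simp
      show "(c0 * cmod (b k)) * (1/2) \<le> Re (b k) * sin (real k * x)"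
        by (intro mult_mono) (use h1 h2 sn[OF k] in auto)
    qed
    then show ?thesis by simp
  qed
  also have "\<dots> = 2 * Re T" by (simp add: T_def Re_sum)
  also have "\<dots> \<le> 2 * cmod T" using complex_Re_le_cmod by simp
  also have "\<dots> = cmod (2 * \<i> * T)" by (simp add: norm_mult)
  finally show ?thesis unfolding x_def[symmetric] sig .
qed



lemma sine_nec:
  fixes b :: "nat \<Rightarrow> complex"
  assumes K: "\<forall>m\<ge>1. (\<Sum>n=m..2*m. cmod (b n - b (Suc n))) \<le> K * (cmod (b m) + cmod (b (2*m)))"
    and Kpos: "K > 0" and c0: "c0 > 0" and sec: "\<forall>k\<ge>1. c0 * cmod (b k) \<le> Re (b k)"
    and UC: "\<And>\<epsilon>. \<epsilon> > 0 \<Longrightarrow> \<exists>N. \<forall>m\<ge>N. \<forall>n (x::real).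
        cmod (\<Sum>k=Suc m..n. b k * (exp (\<i> * of_real x) ^ k - cnj (exp (\<i> * of_real x)) ^ k)) \<le> \<epsilon>"
  shows "(\<lambda>n. of_nat n * b n) \<longlonglongrightarrow> 0"
proof (rule LIMSEQ_I)
  fix r :: real assume r: "r > 0"
  define \<epsilon> where "\<epsilon> = r / (8*(K+1))"
  have ep: "\<epsilon> > 0" using r Kpos by (simp add: \<epsilon>_def)
  obtain N where N: "\<forall>m\<ge>N. \<forall>n (x::real).
        cmod (\<Sum>k=Suc m..n. b k * (exp (\<i> * of_real x) ^ k - cnj (exp (\<i> * of_real x)) ^ k)) \<le> c0 * \<epsilon>"
    using UC[of "c0 * \<epsilon>"] c0 ep by auto
  have B: "(\<Sum>k=p..2*p. cmod (b k)) \<le> \<epsilon>" if p: "p \<ge> N+1" for p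
  proof -
    have p1: "p \<ge> 1" using p by simp
    have "c0 * (\<Sum>k=p..2*p. cmod (b k)) \<le>
     cmod (\<Sum>k=p..2*p. b k * (exp (\<i> * of_real (pi/(4*p))) ^ k - cnj (exp (\<i> * of_real (pi/(4*p)))) ^ k))"
      by (rule block_bound[OF c0 sec p1])
    also have "\<dots> \<le> c0 * \<epsilon>"
    proof -
      have "Suc (p - 1) = p" using p1 by simp
      moreover have "p - 1 \<ge> N" using p by simp
      ultimately show ?thesis using N by metis
    qed
    finally show ?thesis using c0 by simp
  qed
  show "\<exists>no. \<forall>n\<ge>no. norm (of_nat n * b n - 0) < r"
  proof (intro exI allI impI)
    fix n assume n: "n \<ge> 2*N+2"
    have h: "(n+1) div 2 \<ge> N+1" using n by presburger
    have "real n * cmod (b n) \<le> 2*(K+1)*((\<Sum>k=(n+1) div 2..2*((n+1) div 2). cmod (b k)) + (\<Sum>k=n..2*n. cmod (b k)))"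
      by (rule nbvs_point[OF K Kpos]) (use n in simp)
    also have "\<dots> \<le> 2*(K+1)*(\<epsilon> + \<epsilon>)"
      using B[OF h] B[of n] n Kpos by (intro mult_left_mono add_mono) auto
    also have "\<dots> = (8*(K+1)*\<epsilon>) / 2" by (simp add: field_simps)
    also have "(8*(K+1)*\<epsilon>) / 2 = r / 2" using Kpos by (simp add: \<epsilon>_def)
    also have "\<dots> < r" using r by simp
    finally show "norm (of_nat n * b n - 0) < r" by (simp add: norm_mult)
  qed
qed



definition EE :: "real \<Rightarrow> complex" where "EE x = exp (\<i> * of_real x)"

lemma EE_norm [simp]: "cmod (EE x) = 1"
  by (simp add: EE_def norm_exp_i_times)

lemma EE_cnj_norm [simp]: "cmod (cnj (EE x)) = 1"
  by simp

lemma EE_period: "EE (x + 2*pi) = EE x"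
proof -
  have "\<i> * of_real (x + 2*pi) = \<i> * of_real x + 2 * of_real pi * \<i>" by (simp add: algebra_simps)
  then show ?thesis by (simp add: EE_def exp_add exp_two_pi_i)
qed

lemma EE_pow: "exp (\<i> * of_int (int k) * of_real x) = EE x ^ k"
proof -
  have "\<i> * of_int (int k) * of_real x = of_nat k * (\<i> * of_real x)" by simp
  then show ?thesis by (simp only: EE_def exp_of_nat_mult)
qed

lemma EE_pow_neg: "exp (\<i> * of_int (- int k) * of_real x) = cnj (EE x) ^ k"
proof -
  have "cnj (EE x) ^ k = cnj (EE x ^ k)" by simp
  also have "\<dots> = cnj (exp (\<i> * of_int (int k) * of_real x))" by (simp only: EE_pow)
  also have "\<dots> = exp (\<i> * of_int (- int k) * of_real x)" by (simp add: exp_cnj)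
  finally show ?thesis by simp
qed

lemma ps_formula:
  "partial_sum c n x = c 0 + (\<Sum>k=1..n. c (int k) * EE x ^ k + c (- int k) * cnj (EE x) ^ k)"
proof (induction n)
  case 0 then show ?case by (simp add: partial_sum_def)
next
  case (Suc n)
  have set: "{-int (Suc n)..int (Suc n)} = insert (- int (Suc n)) (insert (int (Suc n)) {-int n..int n})"
    by auto
  have "partial_sum c (Suc n) x = c (- int (Suc n)) * exp (\<i> * of_int (- int (Suc n)) * of_real x)
      + (c (int (Suc n)) * exp (\<i> * of_int (int (Suc n)) * of_real x) + partial_sum c n x)"
    unfolding partial_sum_def set by (subst sum.insert; simp)+
  also have "\<dots> = c (- int (Suc n)) * cnj (EE x) ^ Suc n + c (int (Suc n)) * EE x ^ Suc n + partial_sum c n x"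
    by (simp only: EE_pow EE_pow_neg add.assoc)
  finally show ?case using Suc by (simp add: algebra_simps)
qed

lemma ps_period: "partial_sum c n (x + 2*pi) = partial_sum c n x"
  by (simp add: ps_formula EE_period)

lemma ps_diff:
  assumes "m \<le> n"
  shows "partial_sum c n x - partial_sum c m x
     = (\<Sum>k=Suc m..n. c (int k) * EE x ^ k + c (- int k) * cnj (EE x) ^ k)"
proof -
  have "{1..n} = {1..m} \<union> {Suc m..n}" using assms by auto
  then have "(\<Sum>k=1..n. c (int k) * EE x ^ k + c (- int k) * cnj (EE x) ^ k)
      = (\<Sum>k=1..m. c (int k) * EE x ^ k + c (- int k) * cnj (EE x) ^ k)
      + (\<Sum>k=Suc m..n. c (int k) * EE x ^ k + c (- int k) * cnj (EE x) ^ k)"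
    by (simp add: sum.union_disjoint)
  then show ?thesis by (simp add: ps_formula)
qed

lemma u_decomp:
  fixes c :: "int \<Rightarrow> complex" and z w :: complex
  shows "c (int k) * z ^ k + c (- int k) * w ^ k
     = (c (int k) + c (- int k)) * w ^ k + c (int k) * (z ^ k - w ^ k)"
  by (simp add: algebra_simps)

lemma a_tail:
  fixes a :: "nat \<Rightarrow> complex"
  assumes "summable (\<lambda>n. cmod (a (Suc n)))" "\<epsilon> > 0"
  shows "\<exists>N. \<forall>m\<ge>N. \<forall>n. (\<Sum>k=Suc m..n. cmod (a k)) < \<epsilon>"
proof -
  obtain N where N: "\<forall>m\<ge>N. \<forall>n. norm (\<Sum>k=m..<n. cmod (a (Suc k))) < \<epsilon>"
    using assms unfolding summable_Cauchy by blast
  have "(\<Sum>k=Suc m..n. cmod (a k)) < \<epsilon>" if "m \<ge> N" for m n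
  proof -
    have "(\<Sum>k=Suc m..n. cmod (a k)) = (\<Sum>k=Suc m..<Suc n. cmod (a k))"
      by (simp add: atLeastLessThanSuc_atLeastAtMost)
    also have "\<dots> = (\<Sum>k=m..<n. cmod (a (Suc k)))" by (rule sum.shift_bounds_Suc_ivl)
    finally have eq: "(\<Sum>k=Suc m..n. cmod (a k)) = (\<Sum>k=m..<n. cmod (a (Suc k)))" .
    have "norm (\<Sum>k=m..<n. cmod (a (Suc k))) < \<epsilon>" using N that by blast
    moreover have "norm (\<Sum>k=m..<n. cmod (a (Suc k))) = (\<Sum>k=m..<n. cmod (a (Suc k)))"
      by (simp add: sum_nonneg)
    ultimately show ?thesis using eq by simp
  qed
  then show ?thesis by blast
qed

lemma periodic_int:
  fixes f :: "real \<Rightarrow> complex"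
  assumes per: "\<forall>x. f (x + 2*pi) = f x"
  shows "f (y + 2*pi * of_int k) = f y"
proof -
  have pos: "f (y + 2*pi * real j) = f y" for j :: nat and y
  proof (induction j arbitrary: y)
    case 0 then show ?case by simp
  next
    case (Suc j)
    have "y + 2*pi * real (Suc j) = (y + 2*pi * real j) + 2*pi" by (simp add: algebra_simps)
    then have "f (y + 2 * pi * real (Suc j)) = f (y + 2 * pi * real j)" using per by metis
    with Suc.IH show ?case by simp
  qed
  show ?thesis
  proof (cases "k \<ge> 0")
    case True
    then obtain j where j: "k = int j" using nonneg_int_cases by blast
    have "of_int k = real j" using j by simp
    then show ?thesis using pos[of y j] by simp
  next
    case False
    then obtain j where j: "k = - int j" using nonneg_int_cases[of "-k"] by (metis minus_minus neg_0_le_iff_le le_cases)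
    have e: "(y + 2*pi * of_int k) + 2*pi * real j = y" using j by simp
    have "f ((y + 2*pi * of_int k) + 2*pi * real j) = f (y + 2*pi * of_int k)" by (rule pos)
    then show ?thesis using e by simp
  qed
qed

lemma periodic_bounded:
  fixes f :: "real \<Rightarrow> complex"
  assumes cont: "continuous_on UNIV f" and per: "\<forall>x. f (x + 2*pi) = f x"
  shows "\<exists>B. \<forall>x. cmod (f x) \<le> B"
proof -
  have "compact (f ` {0..2*pi})"
    by (rule compact_continuous_image) (use cont continuous_on_subset in auto)
  then obtain B where B: "\<forall>y\<in>f ` {0..2*pi}. cmod y \<le> B"
    using compact_imp_bounded bounded_iff by blast
  have "cmod (f x) \<le> B" for x
  proof -
    define k where "k = \<lfloor>x / (2*pi)\<rfloor>"
    define y where "y = x - 2*pi * of_int k"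
    have k1: "of_int k \<le> x / (2*pi)" "x / (2*pi) < of_int k + 1" unfolding k_def by linarith+
    have "2*pi * of_int k \<le> x" using k1(1) pi_gt_zero by (simp add: field_simps)
    moreover have "x < 2*pi * of_int k + 2*pi" using k1(2) pi_gt_zero by (simp add: field_simps)
    ultimately have y: "y \<in> {0..2*pi}" by (simp add: y_def)
    have "f x = f (y + 2*pi * of_int k)" by (simp add: y_def)
    also have "\<dots> = f y" by (rule periodic_int[OF per])
    finally show ?thesis using B y by auto
  qed
  then show ?thesis by blast
qed

lemma ps_bounded: "cmod (partial_sum c n x) \<le> (\<Sum>k\<in>{-int n..int n}. cmod (c k))"
  unfolding partial_sum_def
  by (rule order_trans[OF norm_sum]) (simp add: norm_mult norm_exp_i_times)

lemma ps_cont: "continuous_on UNIV (partial_sum c n)"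
  unfolding partial_sum_def by (intro continuous_intros)



lemma sup_small:
  fixes c :: "int \<Rightarrow> complex" and f :: "real \<Rightarrow> complex"
  assumes fsup: "(\<lambda>n. SUP x. cmod (f x - partial_sum c n x)) \<longlonglongrightarrow> 0"
  and ep: "\<epsilon> > 0"
  shows "\<exists>N. \<forall>n\<ge>N. \<bar>SUP x. cmod (f x - partial_sum c n x)\<bar> < \<epsilon>/2"
proof -
  have "\<exists>N. \<forall>n\<ge>N. norm ((SUP x. cmod (f x - partial_sum c n x)) - 0) < \<epsilon>/2"
    by (rule LIMSEQ_D[OF fsup half_gt_zero[OF ep]])
  then show ?thesis by simp
qed

theorem theorem2:
  fixes c :: "int \<Rightarrow> complex"
  assumes "\<exists>\<theta>0. 0 \<le> \<theta>0 \<and> \<theta>0 < pi/2 \<and> (\<forall>n::int\<ge>1. c n + c (-n) \<in> sectorM \<theta>0)"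
    and "NBVS (\<lambda>n. c (int n))"
  shows "(\<exists>f :: real \<Rightarrow> complex.
            continuous_on UNIV f \<and> (\<forall>x. f (x + 2*pi) = f x) \<and>
            (\<forall>x. (\<lambda>n. partial_sum c n x) \<longlonglongrightarrow> f x) \<and>
            (\<lambda>n. SUP x. cmod (f x - partial_sum c n x)) \<longlonglongrightarrow> 0)
       \<longleftrightarrow> ((\<lambda>n. of_nat n * c (int n)) \<longlonglongrightarrow> 0 \<and>
            summable (\<lambda>n. cmod (c (int (Suc n)) + c (- int (Suc n)))))"
proof -
  obtain \<theta> where \<theta>: "0 \<le> \<theta>" "\<theta> < pi/2" "\<forall>n::int\<ge>1. c n + c (-n) \<in> sectorM \<theta>"
    using assms(1) by blast
  define a where "a = (\<lambda>k::nat. c (int k) + c (- int k))"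
  define b where "b = (\<lambda>k::nat. c (int k))"
  have c0: "cos \<theta> > 0" using \<theta> by (intro cos_gt_zero_pi) auto
  have asec: "cos \<theta> * cmod (a k) \<le> Re (a k)" if "k \<ge> 1" for k
  proof -
    have "c (int k) + c (- int k) \<in> sectorM \<theta>" using \<theta>(3) that by simp
    then show ?thesis unfolding a_def by (rule sector_re[OF \<theta>(1,2)])
  qed
  obtain \<theta>' K where \<theta>': "0 \<le> \<theta>'" "\<theta>' < pi/2" "\<forall>n\<ge>1. c (int n) \<in> sectorM \<theta>'"
    and Kpos: "K > 0"
    and K0: "\<forall>m\<ge>1. (\<Sum>n=m..2*m. cmod (c (int n) - c (int (Suc n)))) \<le> K * (cmod (c (int m)) + cmod (c (int (2*m))))"
    using assms(2) unfolding NBVS_def by auto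
  have K: "\<forall>m\<ge>1. (\<Sum>n=m..2*m. cmod (b n - b (Suc n))) \<le> K * (cmod (b m) + cmod (b (2*m)))"
    using K0 by (simp add: b_def)
  have c0': "cos \<theta>' > 0" using \<theta>' by (intro cos_gt_zero_pi) auto
  have bsec: "\<forall>k\<ge>1. cos \<theta>' * cmod (b k) \<le> Re (b k)"
    using \<theta>' sector_re[OF \<theta>'(1,2)] by (auto simp: b_def)
  have diffeq: "partial_sum c n x - partial_sum c m x
      = (\<Sum>k=Suc m..n. a k * cnj (EE x) ^ k) + (\<Sum>k=Suc m..n. b k * (EE x ^ k - cnj (EE x) ^ k))"
    if "m \<le> n" for m n x
    unfolding ps_diff[OF that] u_decomp sum.distrib a_def b_def ..
  have anorm: "cmod (\<Sum>k=Suc m..n. a k * cnj (EE x) ^ k) \<le> (\<Sum>k=Suc m..n. cmod (a k))" for m n x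
    by (rule order_trans[OF norm_sum]) (simp add: norm_mult norm_power)
  show ?thesis
  proof
    assume "\<exists>f :: real \<Rightarrow> complex.
            continuous_on UNIV f \<and> (\<forall>x. f (x + 2*pi) = f x) \<and>
            (\<forall>x. (\<lambda>n. partial_sum c n x) \<longlonglongrightarrow> f x) \<and>
            (\<lambda>n. SUP x. cmod (f x - partial_sum c n x)) \<longlonglongrightarrow> 0"
    then obtain f :: "real \<Rightarrow> complex" where fcont: "continuous_on UNIV f"
      and fper: "\<forall>x. f (x + 2*pi) = f x"
      and fconv: "\<forall>x. (\<lambda>n. partial_sum c n x) \<longlonglongrightarrow> f x"
      and fsup: "(\<lambda>n. SUP x. cmod (f x - partial_sum c n x)) \<longlonglongrightarrow> 0"
      by blast
    obtain Bf where Bf: "\<forall>x. cmod (f x) \<le> Bf" using periodic_bounded[OF fcont fper] by blast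
    have bdd: "bdd_above (range (\<lambda>x. cmod (f x - partial_sum c n x)))" for n
    proof (rule bdd_aboveI2)
      fix x
      have "cmod (f x - partial_sum c n x) \<le> cmod (f x) + cmod (partial_sum c n x)"
        by (rule norm_triangle_ineq4)
      also have "\<dots> \<le> Bf + (\<Sum>k\<in>{-int n..int n}. cmod (c k))"
        using Bf ps_bounded[of c n x] by (intro add_mono) auto
      finally show "cmod (f x - partial_sum c n x) \<le> Bf + (\<Sum>k\<in>{-int n..int n}. cmod (c k))" .
    qed
    have le_sup: "cmod (f x - partial_sum c n x) \<le> (SUP x. cmod (f x - partial_sum c n x))" for x n
      by (rule cSUP_upper[OF UNIV_I bdd])
    have UCS: "\<exists>N. \<forall>m\<ge>N. \<forall>n\<ge>N. \<forall>x. cmod (partial_sum c n x - partial_sum c m x) \<le> \<epsilon>"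
      if ep: "\<epsilon> > 0" for \<epsilon>
    proof -
      obtain N where N: "\<forall>n\<ge>N. \<bar>SUP x. cmod (f x - partial_sum c n x)\<bar> < \<epsilon>/2"
        using sup_small[OF fsup ep] by blast
      have sm: "cmod (f x - partial_sum c n x) < \<epsilon>/2" if "n \<ge> N" for n x
      proof -
        have "\<bar>SUP x. cmod (f x - partial_sum c n x)\<bar> < \<epsilon>/2" using N that by blast
        then show ?thesis using le_sup[of x n] by linarith
      qed
      have "cmod (partial_sum c n x - partial_sum c m x) \<le> \<epsilon>" if "m \<ge> N" "n \<ge> N" for m n x
      proof -
        have "partial_sum c n x - partial_sum c m x = (f x - partial_sum c m x) - (f x - partial_sum c n x)"
          by simp
        then have "cmod (partial_sum c n x - partial_sum c m x) \<le> cmod (f x - partial_sum c m x) + cmod (f x - partial_sum c n x)"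
          by (metis norm_triangle_ineq4)
        then show ?thesis using sm[of m x] sm[of n x] that by simp
      qed
      then show ?thesis by blast
    qed
    have S0: "partial_sum c n 0 = c 0 + (\<Sum>k=1..n. a k)" for n
      by (simp add: ps_formula EE_def a_def)
    obtain Bs where Bs: "\<forall>n. cmod (partial_sum c n 0) \<le> Bs"
    proof -
      have "convergent (\<lambda>n. partial_sum c n 0)" using fconv convergentI by blast
      then have "Bseq (\<lambda>n. partial_sum c n 0)" by (rule convergent_imp_Bseq)
      then show ?thesis using that by (metis BseqE)
    qed
    have abound: "(\<Sum>k=1..n. cmod (a k)) \<le> (Bs + cmod (c 0)) / cos \<theta>" for n
    proof -
      have "cos \<theta> * (\<Sum>k=1..n. cmod (a k)) = (\<Sum>k=1..n. cos \<theta> * cmod (a k))" by (simp add: sum_distrib_left)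
      also have "\<dots> \<le> (\<Sum>k=1..n. Re (a k))" by (rule sum_mono) (use asec in auto)
      also have "\<dots> = Re (\<Sum>k=1..n. a k)" by (simp add: Re_sum)
      also have "\<dots> \<le> cmod (\<Sum>k=1..n. a k)" by (rule complex_Re_le_cmod)
      also have "\<dots> = cmod (partial_sum c n 0 - c 0)" by (simp add: S0)
      also have "\<dots> \<le> cmod (partial_sum c n 0) + cmod (c 0)" by (rule norm_triangle_ineq4)
      also have "\<dots> \<le> Bs + cmod (c 0)" using Bs by simp
      finally show ?thesis using c0 by (simp add: field_simps mult.commute)
    qed
    have summ: "summable (\<lambda>n. cmod (a (Suc n)))"
    proof (rule bounded_imp_summable)
      fix n
      have "(\<Sum>k\<le>n. cmod (a (Suc k))) = (\<Sum>k=Suc 0..Suc n. cmod (a k))"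
        by (simp only: atMost_atLeast0 sum.shift_bounds_cl_Suc_ivl)
      also have "\<dots> \<le> (Bs + cmod (c 0)) / cos \<theta>" using abound[of "Suc n"] by (simp only: One_nat_def)
      finally show "(\<Sum>k\<le>n. cmod (a (Suc k))) \<le> (Bs + cmod (c 0)) / cos \<theta>" .
    qed simp
    have UCb: "\<exists>N. \<forall>m\<ge>N. \<forall>n (x::real).
        cmod (\<Sum>k=Suc m..n. b k * (exp (\<i> * of_real x) ^ k - cnj (exp (\<i> * of_real x)) ^ k)) \<le> \<epsilon>"
      if ep: "\<epsilon> > 0" for \<epsilon>
    proof -
      obtain N1 where N1: "\<forall>m\<ge>N1. \<forall>n. (\<Sum>k=Suc m..n. cmod (a k)) < \<epsilon>/2"
        using a_tail[OF summ half_gt_zero[OF ep]] by blast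
      obtain N2 where N2: "\<forall>m\<ge>N2. \<forall>n\<ge>N2. \<forall>x. cmod (partial_sum c n x - partial_sum c m x) \<le> \<epsilon>/2"
        using UCS[OF half_gt_zero[OF ep]] by blast
      have "cmod (\<Sum>k=Suc m..n. b k * (EE x ^ k - cnj (EE x) ^ k)) \<le> \<epsilon>"
        if m: "m \<ge> max N1 N2" for m n x
      proof (cases "m \<le> n")
        case False then show ?thesis using ep by simp
      next
        case True
        have "(\<Sum>k=Suc m..n. b k * (EE x ^ k - cnj (EE x) ^ k))
            = (partial_sum c n x - partial_sum c m x) - (\<Sum>k=Suc m..n. a k * cnj (EE x) ^ k)"
          using diffeq[OF True] by simp
        then have "cmod (\<Sum>k=Suc m..n. b k * (EE x ^ k - cnj (EE x) ^ k))
            \<le> cmod (partial_sum c n x - partial_sum c m x) + cmod (\<Sum>k=Suc m..n. a k * cnj (EE x) ^ k)"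
          by (metis norm_triangle_ineq4)
        also have "\<dots> \<le> \<epsilon>/2 + \<epsilon>/2"
        proof (rule add_mono)
          show "cmod (partial_sum c n x - partial_sum c m x) \<le> \<epsilon>/2" using N2 m True by auto
          have "(\<Sum>k=Suc m..n. cmod (a k)) < \<epsilon>/2" using N1 m by auto
          then show "cmod (\<Sum>k=Suc m..n. a k * cnj (EE x) ^ k) \<le> \<epsilon>/2" using anorm[where m=m and n=n and x=x] by linarith
        qed
        finally show ?thesis by simp
      qed
      then show ?thesis unfolding EE_def by blast
    qed
    have "(\<lambda>n. of_nat n * b n) \<longlonglongrightarrow> 0"
      by (rule sine_nec[OF K Kpos c0' bsec UCb])
    then show "(\<lambda>n. of_nat n * c (int n)) \<longlonglongrightarrow> 0 \<and>
            summable (\<lambda>n. cmod (c (int (Suc n)) + c (- int (Suc n))))"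
      using summ by (simp add: a_def b_def)
  next
    assume H: "(\<lambda>n. of_nat n * c (int n)) \<longlonglongrightarrow> 0 \<and>
            summable (\<lambda>n. cmod (c (int (Suc n)) + c (- int (Suc n))))"
    have lim: "(\<lambda>n. of_nat n * b n) \<longlonglongrightarrow> 0" using H by (simp add: b_def)
    have summ: "summable (\<lambda>n. cmod (a (Suc n)))" using H by (simp add: a_def)
    have UCS: "\<exists>N. \<forall>m\<ge>N. \<forall>n\<ge>m. \<forall>x. cmod (partial_sum c n x - partial_sum c m x) \<le> \<epsilon>"
      if ep: "\<epsilon> > 0" for \<epsilon>
    proof -
      obtain N1 where N1: "\<forall>m\<ge>N1. \<forall>n. (\<Sum>k=Suc m..n. cmod (a k)) < \<epsilon>/2"
        using a_tail[OF summ half_gt_zero[OF ep]] by blast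
      obtain N2 where N2: "\<forall>m\<ge>N2. \<forall>n z. cmod z = 1 \<longrightarrow> cmod (\<Sum>k=Suc m..n. b k * (z^k - cnj z^k)) \<le> \<epsilon>/2"
        using sine_suff[OF K Kpos lim half_gt_zero[OF ep]] by blast
      have "cmod (partial_sum c n x - partial_sum c m x) \<le> \<epsilon>" if m: "m \<ge> max N1 N2" "m \<le> n" for m n x
      proof -
        have "cmod (partial_sum c n x - partial_sum c m x)
            \<le> cmod (\<Sum>k=Suc m..n. a k * cnj (EE x) ^ k) + cmod (\<Sum>k=Suc m..n. b k * (EE x ^ k - cnj (EE x) ^ k))"
          unfolding diffeq[OF m(2)] by (rule norm_triangle_ineq)
        also have "\<dots> \<le> \<epsilon>/2 + \<epsilon>/2"
        proof (rule add_mono)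
          have "(\<Sum>k=Suc m..n. cmod (a k)) < \<epsilon>/2" using N1 m by auto
          then show "cmod (\<Sum>k=Suc m..n. a k * cnj (EE x) ^ k) \<le> \<epsilon>/2" using anorm[where m=m and n=n and x=x] by linarith
          show "cmod (\<Sum>k=Suc m..n. b k * (EE x ^ k - cnj (EE x) ^ k)) \<le> \<epsilon>/2"
            using N2 m EE_norm[of x] by auto
        qed
        finally show ?thesis by simp
      qed
      then show ?thesis by blast
    qed
    have cauchy: "Cauchy (\<lambda>n. partial_sum c n x)" for x
    proof (rule CauchyI)
      fix e :: real assume e: "e > 0"
      obtain N where N: "\<forall>m\<ge>N. \<forall>n\<ge>m. \<forall>x. cmod (partial_sum c n x - partial_sum c m x) \<le> e/2"
        using UCS[OF half_gt_zero[OF e]] by blast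
      have "norm (partial_sum c m x - partial_sum c n x) < e" if "m \<ge> N" "n \<ge> N" for m n
      proof (cases "m \<le> n")
        case True
        then have "cmod (partial_sum c n x - partial_sum c m x) \<le> e/2" using N that by blast
        then show ?thesis using e by (simp add: norm_minus_commute)
      next
        case False
        then have "cmod (partial_sum c m x - partial_sum c n x) \<le> e/2" using N that by auto
        then show ?thesis using e by simp
      qed
      then show "\<exists>M. \<forall>m\<ge>M. \<forall>n\<ge>M. norm (partial_sum c m x - partial_sum c n x) < e" by blast
    qed
    define f where "f x = lim (\<lambda>n. partial_sum c n x)" for x
    have conv: "(\<lambda>n. partial_sum c n x) \<longlonglongrightarrow> f x" for x
      using cauchy[of x] unfolding f_def Cauchy_convergent_iff convergent_LIMSEQ_iff .
    have unif: "\<exists>N. \<forall>n\<ge>N. \<forall>x. cmod (f x - partial_sum c n x) \<le> \<epsilon>" if ep: "\<epsilon> > 0" for \<epsilon>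
    proof -
      obtain N where N: "\<forall>m\<ge>N. \<forall>n\<ge>m. \<forall>x. cmod (partial_sum c n x - partial_sum c m x) \<le> \<epsilon>"
        using UCS[OF ep] by blast
      have "cmod (f x - partial_sum c n x) \<le> \<epsilon>" if n: "n \<ge> N" for n x
      proof (rule LIMSEQ_le_const2)
        show "(\<lambda>m. cmod (partial_sum c m x - partial_sum c n x)) \<longlonglongrightarrow> cmod (f x - partial_sum c n x)"
          by (intro tendsto_intros conv)
        show "\<exists>M. \<forall>m\<ge>M. cmod (partial_sum c m x - partial_sum c n x) \<le> \<epsilon>"
          using N n by (intro exI[of _ n]) auto
      qed
      then show ?thesis by blast
    qed
    have ulim: "uniform_limit UNIV (\<lambda>n. partial_sum c n) f sequentially"
      unfolding uniform_limit_iff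
    proof (intro allI impI)
      fix e :: real assume e: "e > 0"
      obtain N where N: "\<forall>n\<ge>N. \<forall>x. cmod (f x - partial_sum c n x) \<le> e/2"
        using unif[OF half_gt_zero[OF e]] by blast
      show "\<forall>\<^sub>F n in sequentially. \<forall>x\<in>UNIV. dist (partial_sum c n x) (f x) < e"
      proof (rule eventually_sequentiallyI[of N])
        fix n assume "n \<ge> N"
        show "\<forall>x\<in>UNIV. dist (partial_sum c n x) (f x) < e"
        proof
          fix x
          have "cmod (f x - partial_sum c n x) \<le> e/2" using N \<open>n \<ge> N\<close> by blast
          then show "dist (partial_sum c n x) (f x) < e" using e by (simp add: dist_norm norm_minus_commute)
        qed
      qed
    qed
    have fcont: "continuous_on UNIV f"
      by (rule uniform_limit_theorem[OF _ ulim]) (auto simp: ps_cont)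
    have fper: "f (x + 2*pi) = f x" for x
    proof -
      have "(\<lambda>n. partial_sum c n (x + 2*pi)) \<longlonglongrightarrow> f x" using conv[of x] by (simp add: ps_period)
      then show ?thesis using conv[of "x + 2*pi"] LIMSEQ_unique by blast
    qed
    have fsup: "(\<lambda>n. SUP x. cmod (f x - partial_sum c n x)) \<longlonglongrightarrow> 0"
    proof (rule LIMSEQ_I)
      fix r :: real assume r: "r > 0"
      obtain N where N: "\<forall>n\<ge>N. \<forall>x. cmod (f x - partial_sum c n x) \<le> r/2"
        using unif[OF half_gt_zero[OF r]] by blast
      have "norm ((SUP x. cmod (f x - partial_sum c n x)) - 0) < r" if n: "n \<ge> N" for n
      proof -
        have up: "(SUP x. cmod (f x - partial_sum c n x)) \<le> r/2"
          by (rule cSUP_least) (use N n in auto)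
        have bdd: "bdd_above (range (\<lambda>x. cmod (f x - partial_sum c n x)))"
          using N n by (intro bdd_aboveI2[where M="r/2"]) auto
        have lo0: "cmod (f 0 - partial_sum c n 0) \<le> (SUP x. cmod (f x - partial_sum c n x))"
          by (rule cSUP_upper[OF UNIV_I bdd])
        have lo: "0 \<le> (SUP x. cmod (f x - partial_sum c n x))"
          using lo0 norm_ge_zero[of "f 0 - partial_sum c n 0"] by linarith
        show ?thesis using up lo r by simp
      qed
      then show "\<exists>no. \<forall>n\<ge>no. norm ((SUP x. cmod (f x - partial_sum c n x)) - 0) < r" by blast
    qed
    show "\<exists>f :: real \<Rightarrow> complex.
            continuous_on UNIV f \<and> (\<forall>x. f (x + 2*pi) = f x) \<and>
            (\<forall>x. (\<lambda>n. partial_sum c n x) \<longlonglongrightarrow> f x) \<and>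
            (\<lambda>n. SUP x. cmod (f x - partial_sum c n x)) \<longlonglongrightarrow> 0"
      using fcont fper conv fsup by blast
  qed
qed

end
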